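(* Let $\nu<0$ and define $\mathcal{R}_\nu:\mathbb{R}\to\mathbb{R}$ by $$\mathcal{R}_\nu(x):=\frac{(H_{\nu-1}(x))^2}{H_{\nu}(x)\,H_{\nu-2}(x)},\qquad x\in\mathbb{R},$$ where $H_\alpha$ denotes the Hermite function of index $\alpha$. Then $$1<\mathcal{R}_\nu(x)<\frac{\nu-1}{\nu}\qquad\text{for all }x\in\mathbb{R}.$$ In particular, the Turán-type inequality $$H_{\nu-1}(x)^2-H_{\nu}(x)H_{\nu-2}(x)>0$$ holds for all $x\in\mathbb{R}$.
   Context: For $\alpha<0$, the Hermite function $H_\alpha:\mathbb{R}\to\mathbb{R}$ is the solution of the ODE $u''(x)-2xu'(x)+2\alpha u(x)=0$ given by the integral representation $$H_\alpha(x)=\frac{1}{\Gamma(-\alpha)}\int_0^\infty t^{-\alpha-1}e^{-t^2-2xt}\,dt,\qquad x\in\mathbb{R},$$ where $\Gamma$ is Euler's Gamma function. In particular $H_\alpha(x)>0$ for all $x$ when $\alpha<0$. *)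

theory Defs
  imports "HOL-Analysis.Analysis"
begin

text \<open>Hermite function of negative index alpha, via its integral representation
  H_alpha(x) = 1/Gamma(-alpha) * integral over (0,infinity) of t^(-alpha-1) exp(-t^2-2xt) dt.
  (The definition is only intended for alpha < 0.)\<close>
definition hermite_fun :: "real \<Rightarrow> real \<Rightarrow> real" where
  "hermite_fun \<alpha> x =
     (1 / Gamma (- \<alpha>)) *
     (LBINT t:{0<..}. t powr (- \<alpha> - 1) * exp (- (t\<^sup>2) - 2 * x * t))"

definition turan_ratio :: "real \<Rightarrow> real \<Rightarrow> real" where
  "turan_ratio \<nu> x =
     (hermite_fun (\<nu> - 1) x)\<^sup>2 / (hermite_fun \<nu> x * hermite_fun (\<nu> - 2) x)"

end

theory Submission imports Defs "HOL-Real_Asymp.Real_Asymp" begin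

lemma pos_lemma:
  fixes h :: "real \<Rightarrow> real"
  assumes int: "set_integrable lborel {0<..} h" and nn: "\<And>t. t > 0 \<Longrightarrow> h t \<ge> 0"
    and cd: "0 \<le> c" "c < d" and pos: "\<And>t. c < t \<Longrightarrow> t < d \<Longrightarrow> h t > 0"
  shows "(LBINT t:{0<..}. h t) > 0"
proof -
  let ?g = "\<lambda>t. indicator {0<..} t *\<^sub>R h t"
  have i: "integrable lborel ?g" using int by (simp add: set_integrable_def)
  have n: "AE t in lborel. 0 \<le> ?g t" by (intro AE_I2) (auto simp: indicator_def nn)
  have ge: "0 \<le> integral\<^sup>L lborel ?g" by (rule integral_nonneg_AE[OF n])
  have "integral\<^sup>L lborel ?g \<noteq> 0"
  proof
    assume "integral\<^sup>L lborel ?g = 0"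
    then have "AE t in lborel. ?g t = 0" using integral_nonneg_eq_0_iff_AE[OF i n] by simp
    then have "AE t in lborel. t \<notin> {c<..<d}"
    proof (rule AE_mp, intro AE_I2 impI)
      fix t assume "?g t = 0"
      then show "t \<notin> {c<..<d}" using pos[of t] cd by (auto simp: indicator_def split: if_splits)
    qed
    then have "emeasure lborel {c<..<d} = 0"
      by (subst (asm) AE_iff_measurable[of "{c<..<d}"]) auto
    then show False using cd by simp
  qed
  with ge show ?thesis by (simp add: set_lebesgue_integral_def)
qed

lemma w_bound:
  fixes x t :: real
  shows "exp (- (t\<^sup>2) - 2 * x * t) \<le> exp ((1 - 2*x)\<^sup>2 / 4) / exp t"
proof -
  have "0 \<le> (t + (2*x-1)/2)\<^sup>2" by simp
  also have "(t + (2*x-1)/2)\<^sup>2 = t\<^sup>2 + 2*x*t - t + (1 - 2*x)\<^sup>2 / 4"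
    by (simp add: power2_eq_square algebra_simps)
  finally have "- (t\<^sup>2) - 2 * x * t \<le> (1 - 2*x)\<^sup>2 / 4 - t"
    by linarith
  then have "exp (- (t\<^sup>2) - 2 * x * t) \<le> exp ((1 - 2*x)\<^sup>2 / 4 - t)" by simp
  also have "exp ((1 - 2*x)\<^sup>2 / 4 - t) = exp ((1 - 2*x)\<^sup>2 / 4) / exp t"
    by (rule exp_diff)
  finally show ?thesis .
qed

lemma integ:
  fixes x p :: real
  assumes p: "p > -1"
  shows "set_integrable lborel {0<..} (\<lambda>t. t powr p * exp (- (t\<^sup>2) - 2 * x * t))"
proof -
  define C where "C = exp ((1 - 2*x)\<^sup>2 / 4)"
  have "((\<lambda>t. t powr (p + 1 - 1) / exp t) has_integral Gamma (p+1)) {0..}"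
    by (rule Gamma_integral_real) (use p in auto)
  then have "(\<lambda>t. t powr p / exp t) integrable_on {0..}"
    by (auto simp: has_integral_integrable_integral)
  then have "(\<lambda>t. t powr p / exp t) absolutely_integrable_on {0..}"
    by (subst absolutely_integrable_on_iff_nonneg) auto
  from integrable_mult_right[OF this [unfolded set_integrable_def], of C]
  have I: "integrable lborel (\<lambda>t. indicat_real {0..} t *\<^sub>R (C * (t powr p / exp t)))"
    by (subst (asm) integrable_completion) (auto simp: mult_ac)
  show ?thesis
    unfolding set_integrable_def
  proof (rule Bochner_Integration.integrable_bound[OF I _ AE_I2])
    show "(\<lambda>t. indicat_real {0<..} t *\<^sub>R (t powr p * exp (- t\<^sup>2 - 2 * x * t))) \<in> borel_measurable lborel"
      by measurable
  next
    fix t :: real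
    have le: "t powr p * exp (- t\<^sup>2 - 2 * x * t) \<le> t powr p * (C / exp t)"
      by (intro mult_left_mono) (auto simp: C_def w_bound)
    have e: "t powr p * (C / exp t) = C * (t powr p / exp t)" by simp
    show "norm (indicat_real {0<..} t *\<^sub>R (t powr p * exp (- t\<^sup>2 - 2 * x * t)))
        \<le> norm (indicat_real {0..} t *\<^sub>R (C * (t powr p / exp t)))"
      using le unfolding e by (cases "t > 0") (simp_all add: indicator_def C_def)
  qed
qed

lemma ibp:
  fixes x p :: real
  assumes p: "p > 0"
  defines "J \<equiv> \<lambda>q. LBINT t:{0<..}. t powr q * exp (- (t\<^sup>2) - 2 * x * t)"
  shows "p * J (p - 1) - 2 * J (p + 1) - 2 * x * J p = 0"
proof -
  define w where "w = (\<lambda>t::real. exp (- (t\<^sup>2) - 2 * x * t))"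
  define f where "f = (\<lambda>t. p * (t powr (p - 1) * w t) - 2 * (t powr (p + 1) * w t) - 2 * x * (t powr p * w t))"
  have i1: "set_integrable lborel {0<..} (\<lambda>t. t powr (p - 1) * w t)"
    unfolding w_def by (rule integ) (use p in auto)
  have i2: "set_integrable lborel {0<..} (\<lambda>t. t powr (p + 1) * w t)"
    unfolding w_def by (rule integ) (use p in auto)
  have i3: "set_integrable lborel {0<..} (\<lambda>t. t powr p * w t)"
    unfolding w_def by (rule integ) (use p in auto)
  have fi: "set_integrable lborel {0<..} f"
    unfolding f_def
    by (intro set_integral_diff(1) set_integrable_mult_right i1 i2 i3)
  have "(LBINT t=ereal 0..\<infinity>. f t) = 0 - 0"
  proof (rule interval_integral_FTC_integrable[where F = "\<lambda>t. t powr p * w t"])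
    show "ereal 0 < \<infinity>" by simp
  next
    fix t assume "ereal 0 < ereal t" "ereal t < \<infinity>"
    then have t: "t > 0" by simp
    have "((\<lambda>t. t powr p * w t) has_real_derivative
        p * t powr (p - 1) * w t + t powr p * (w t * (- (2 * t) - 2 * x))) (at t)"
      unfolding w_def using t
      by (auto intro!: derivative_eq_intros)
    moreover have "p * t powr (p - 1) * w t + t powr p * (w t * (- (2 * t) - 2 * x)) = f t"
      using t by (simp add: f_def powr_add algebra_simps)
    ultimately show "((\<lambda>t. t powr p * w t) has_vector_derivative f t) (at t)"
      by (simp add: has_real_derivative_iff_has_vector_derivative)
  next
    fix t assume "ereal 0 < ereal t" "ereal t < \<infinity>"
    then have t: "t > 0" by simp
    show "isCont f t" unfolding f_def w_def using t by (intro continuous_intros) auto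
  next
    show "set_integrable lborel (einterval (ereal 0) \<infinity>) f" using fi by simp
  next
    have "((\<lambda>t. t powr p * exp (- (t\<^sup>2) - 2 * x * t)) \<longlongrightarrow> 0) (at_right 0)"
      using p by real_asymp
    then show "(((\<lambda>t. t powr p * w t) \<circ> real_of_ereal) \<longlongrightarrow> 0) (at_right (ereal 0))"
      unfolding ereal_tendsto_simps w_def .
  next
    have "((\<lambda>t. t powr p * exp (- (t\<^sup>2) - 2 * x * t)) \<longlongrightarrow> 0) at_top"
      by real_asymp
    then show "(((\<lambda>t. t powr p * w t) \<circ> real_of_ereal) \<longlongrightarrow> 0) (at_left \<infinity>)"
      unfolding ereal_tendsto_simps w_def .
  qed
  then have "(LBINT t:{0<..}. f t) = 0"
    by (simp add: interval_lebesgue_integral_def)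
  then show ?thesis
    unfolding f_def J_def w_def using i1 i2 i3 unfolding w_def
    by (simp add: set_integral_diff set_integrable_mult_right)
qed


lemma quad:
  fixes x p l :: real
  assumes p: "p > -1"
  defines "J \<equiv> \<lambda>q. LBINT t:{0<..}. t powr q * exp (- (t\<^sup>2) - 2 * x * t)"
  shows "l\<^sup>2 * J p - 2 * l * J (p + 1) + J (p + 2) > 0"
proof -
  define w where "w = (\<lambda>t::real. exp (- (t\<^sup>2) - 2 * x * t))"
  have i1: "set_integrable lborel {0<..} (\<lambda>t. t powr p * w t)"
    unfolding w_def by (rule integ) (use p in auto)
  have i2: "set_integrable lborel {0<..} (\<lambda>t. t powr (p + 1) * w t)"
    unfolding w_def by (rule integ) (use p in auto)
  have i3: "set_integrable lborel {0<..} (\<lambda>t. t powr (p + 2) * w t)"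
    unfolding w_def by (rule integ) (use p in auto)
  define g where "g = (\<lambda>t. l\<^sup>2 * (t powr p * w t) - 2 * l * (t powr (p + 1) * w t) + t powr (p + 2) * w t)"
  have gi: "set_integrable lborel {0<..} g"
    unfolding g_def by (intro set_integral_add(1) set_integral_diff(1) set_integrable_mult_right i1 i2 i3)
  have gJ: "(LBINT t:{0<..}. g t) = l\<^sup>2 * J p - 2 * l * J (p + 1) + J (p + 2)"
    unfolding g_def J_def w_def using i1 i2 i3 unfolding w_def
    by (simp add: set_integral_diff set_integral_add set_integrable_mult_right)
  have geq: "g t = t powr p * (l - t)\<^sup>2 * w t" if "t > 0" for t
  proof -
    have "t powr (p + 1) = t powr p * t" using that by (simp add: powr_add)
    moreover have "t powr (p + 2) = t powr p * t\<^sup>2" using that by (simp add: powr_add)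
    ultimately show ?thesis unfolding g_def by (simp add: power2_eq_square algebra_simps)
  qed
  have "(LBINT t:{0<..}. g t) > 0"
  proof (rule pos_lemma[OF gi, of "\<bar>l\<bar> + 1" "\<bar>l\<bar> + 2"])
    fix t :: real assume "t > 0" then show "0 \<le> g t" by (simp add: geq w_def)
  next
    fix t :: real assume "\<bar>l\<bar> + 1 < t" "t < \<bar>l\<bar> + 2"
    then have "t > 0" "l - t \<noteq> 0" by auto
    then show "0 < g t" by (simp add: geq w_def)
  qed auto
  then show ?thesis using gJ by simp
qed

lemma Jpos:
  fixes x p :: real
  assumes p: "p > -1"
  shows "(LBINT t:{0<..}. t powr p * exp (- (t\<^sup>2) - 2 * x * t)) > 0"
  using pos_lemma[OF integ[OF p, of x], of 1 2] by simp

theorem corollary3p2: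
  fixes \<nu> :: real
  assumes "\<nu> < 0"
  shows "(\<forall>x::real. 1 < turan_ratio \<nu> x \<and> turan_ratio \<nu> x < (\<nu> - 1) / \<nu>) \<and>
         (\<forall>x::real. (hermite_fun (\<nu> - 1) x)\<^sup>2 - hermite_fun \<nu> x * hermite_fun (\<nu> - 2) x > 0)"
proof -
  define a where "a = - \<nu>"
  have a: "a > 0" using assms by (simp add: a_def)
  have main: "1 < turan_ratio \<nu> x \<and> turan_ratio \<nu> x < (\<nu> - 1) / \<nu> \<and>
      (hermite_fun (\<nu> - 1) x)\<^sup>2 - hermite_fun \<nu> x * hermite_fun (\<nu> - 2) x > 0" for x
  proof -
    define J where "J = (\<lambda>q. LBINT t:{0<..}. t powr q * exp (- (t\<^sup>2) - 2 * x * t))"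
    define G where "G = Gamma a"
    have G: "G > 0" using a by (simp add: G_def Gamma_real_pos)
    have G1: "Gamma (a + 1) = a * G" using a unfolding G_def
      by (subst Gamma_plus1) (auto simp: nonpos_Ints_def)
    have G2: "Gamma (a + 2) = (a + 1) * a * G"
    proof -
      have "Gamma (a + 1 + 1) = (a + 1) * Gamma (a + 1)" using a
        by (subst Gamma_plus1) (auto simp: nonpos_Ints_def)
      then show ?thesis by (simp add: G1 add.assoc)
    qed
    have H0: "hermite_fun \<nu> x = J (a - 1) / G"
      unfolding hermite_fun_def J_def G_def a_def by simp
    have H1: "hermite_fun (\<nu> - 1) x = J a / (a * G)"
    proof -
      have "hermite_fun (\<nu> - 1) x = J a / Gamma (a + 1)"
        unfolding hermite_fun_def J_def a_def by simp
      then show ?thesis by (simp add: G1)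
    qed
    have H2: "hermite_fun (\<nu> - 2) x = J (a + 1) / ((a + 1) * a * G)"
    proof -
      have "hermite_fun (\<nu> - 2) x = J (a + 1) / Gamma (a + 2)"
        unfolding hermite_fun_def J_def a_def by (simp add: algebra_simps)
      then show ?thesis by (simp add: G2)
    qed
    have q0: "l\<^sup>2 * J (a - 1) - 2 * l * J a + J (a + 1) > 0" for l
      using quad[where p="a - 1" and x=x and l=l] a unfolding J_def by (simp add: algebra_simps)
    have q1: "l\<^sup>2 * J a - 2 * l * J (a + 1) + J (a + 2) > 0" for l
      using quad[where p=a and x=x and l=l] a unfolding J_def by (simp add: algebra_simps)
    have J0: "J (a - 1) > 0" using Jpos[where p="a - 1" and x=x] a unfolding J_def by simp
    have J1: "J a > 0" using Jpos[where p="a" and x=x] a unfolding J_def by simp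
    have e0: "a * J (a - 1) - 2 * J (a + 1) - 2 * x * J a = 0"
      using ibp[where p=a and x=x] a unfolding J_def by simp
    have e1: "(a + 1) * J a - 2 * J (a + 2) - 2 * x * J (a + 1) = 0"
      using ibp[where p="a + 1" and x=x] a unfolding J_def by (simp add: algebra_simps)
    have cs0: "(J a)\<^sup>2 < J (a - 1) * J (a + 1)"
    proof -
      have "(J a / J (a - 1))\<^sup>2 * J (a - 1) - 2 * (J a / J (a - 1)) * J a + J (a + 1) > 0"
        by (rule q0)
      then show ?thesis using J0 by (simp add: power2_eq_square field_simps)
    qed
    have cs1: "(J (a + 1))\<^sup>2 < J a * J (a + 2)"
    proof -
      have "(J (a + 1) / J a)\<^sup>2 * J a - 2 * (J (a + 1) / J a) * J (a + 1) + J (a + 2) > 0"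
        by (rule q1)
      then show ?thesis using J1 by (simp add: power2_eq_square field_simps)
    qed
    have J2: "J (a + 1) > 0" using Jpos[where p="a + 1" and x=x] a unfolding J_def by simp
    have key: "a * J (a - 1) * J (a + 1) < (a + 1) * (J a)\<^sup>2"
    proof -
      have "(a + 1) * (J a)\<^sup>2 = J a * (2 * J (a + 2) + 2 * x * J (a + 1))"
        using e1 by (simp add: power2_eq_square algebra_simps)
      moreover have "a * J (a - 1) * J (a + 1) = J (a + 1) * (2 * J (a + 1) + 2 * x * J a)"
        using e0 by (simp add: power2_eq_square algebra_simps)
      ultimately show ?thesis using cs1 by (simp add: power2_eq_square algebra_simps)
    qed
    have R: "turan_ratio \<nu> x = (a + 1) * (J a)\<^sup>2 / (a * J (a - 1) * J (a + 1))"
      unfolding turan_ratio_def H0 H1 H2 using a G J0 J1 J2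
      by (simp add: power2_eq_square field_simps)
    have nu: "(\<nu> - 1) / \<nu> = (a + 1) / a" using a unfolding a_def by (simp add: field_simps)
    have pos: "a * J (a - 1) * J (a + 1) > 0" using a J0 J2 by simp
    have r1: "1 < turan_ratio \<nu> x" unfolding R using key pos by simp
    have "a * (a + 1) * (J a)\<^sup>2 < a * (a + 1) * (J (a - 1) * J (a + 1))"
      by (rule mult_strict_left_mono) (use cs0 a in auto)
    then have r2: "turan_ratio \<nu> x < (\<nu> - 1) / \<nu>" unfolding R nu using pos a J0 J2
      by (simp add: field_simps)
    have r3: "(hermite_fun (\<nu> - 1) x)\<^sup>2 - hermite_fun \<nu> x * hermite_fun (\<nu> - 2) x > 0"
    proof -
      have "(hermite_fun (\<nu> - 1) x)\<^sup>2 - hermite_fun \<nu> x * hermite_fun (\<nu> - 2) x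
          = ((a + 1) * (J a)\<^sup>2 - a * J (a - 1) * J (a + 1)) / (a\<^sup>2 * (a + 1) * G\<^sup>2)"
      proof -
        have n: "a \<noteq> 0" "G \<noteq> 0" "a + 1 \<noteq> 0" "1 + a \<noteq> 0" using a G by auto
        show ?thesis unfolding H0 H1 H2
          by (simp add: n power2_eq_square divide_simps)
      qed
      then show ?thesis using key a G by simp
    qed
    show ?thesis using r1 r2 r3 by blast
  qed
  show ?thesis using main by blast
qed

end
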